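(* Let $(G,* )$ be a group and let $\mathcal{L},\mathcal{R}$ be families of subsets of $G$ such that: (1) whenever $x*y\in L\in\mathcal{L}$, there exist $L_x,L_y\in\mathcal{L}$ with $x\in L_x$, $y\in L_y$ and $L_x*L_y\subseteq L$; (2) whenever $x*y\in R\in\mathcal{R}$, there exist $R_x,R_y\in\mathcal{R}$ with $x\in R_x$, $y\in R_y$ and $R_x*R_y\subseteq R$. Equip $G$ with the topology generated by $\mathcal{L}\cup\mathcal{R}$ as a subbase and $G\times G$ with the product topology. Then the map $f:G\times G\to G$, $f(x,y)=x*y$, is continuous.
   Context: For $A,B\subseteq G$, $A*B=\{a*b : a\in A,\ b\in B\}$. *)

theory Defs
  imports "HOL-Analysis.Analysis" "HOL-Algebra.Coset"
begin

end

theory Submission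
  imports Defs
begin

lemma aux_open:
  fixes G (structure)
    and \<L> \<S> :: "'a set set"
  assumes L_sub: "\<L> \<subseteq> Pow (carrier G)"
    and LS: "\<L> \<subseteq> \<S>" and Ssub: "\<Union>\<S> = carrier G"
    and L_cond: "\<And>x y L. \<lbrakk>x \<in> carrier G; y \<in> carrier G; L \<in> \<L>; x \<otimes> y \<in> L\<rbrakk> \<Longrightarrow>
        \<exists>Lx\<in>\<L>. \<exists>Ly\<in>\<L>. x \<in> Lx \<and> y \<in> Ly \<and> Lx <#> Ly \<subseteq> L"
    and U: "U \<in> \<L>"
  shows "openin (prod_topology (topology_generated_by \<S>) (topology_generated_by \<S>))
           ((\<lambda>(x, y). x \<otimes> y) -` U \<inter> topspace (prod_topology (topology_generated_by \<S>) (topology_generated_by \<S>)))"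
  unfolding openin_prod_topology_alt
proof (intro allI impI)
  fix x y
  assume xy: "(x, y) \<in> (\<lambda>(x, y). x \<otimes> y) -` U \<inter> topspace (prod_topology (topology_generated_by \<S>) (topology_generated_by \<S>))"
  hence xc: "x \<in> carrier G" "y \<in> carrier G" "x \<otimes> y \<in> U" using Ssub by auto
  obtain Lx Ly where h: "Lx \<in> \<L>" "Ly \<in> \<L>" "x \<in> Lx" "y \<in> Ly" "Lx <#> Ly \<subseteq> U"
    using L_cond[OF xc(1,2) U xc(3)] by blast
  have "Lx \<times> Ly \<subseteq> (\<lambda>(x, y). x \<otimes> y) -` U \<inter> topspace (prod_topology (topology_generated_by \<S>) (topology_generated_by \<S>))"
  proof
    fix p assume p: "p \<in> Lx \<times> Ly"
    then obtain a b where ab: "p = (a,b)" "a \<in> Lx" "b \<in> Ly" by auto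
    have "a \<otimes> b \<in> Lx <#> Ly" using ab unfolding set_mult_def by auto
    moreover have "a \<in> carrier G" "b \<in> carrier G" using ab h L_sub by auto
    ultimately show "p \<in> (\<lambda>(x, y). x \<otimes> y) -` U \<inter> topspace (prod_topology (topology_generated_by \<S>) (topology_generated_by \<S>))"
      using ab h Ssub by auto
  qed
  moreover have "openin (topology_generated_by \<S>) Lx" "openin (topology_generated_by \<S>) Ly"
    using h LS topology_generated_by_Basis by blast+
  ultimately show "\<exists>U' V. openin (topology_generated_by \<S>) U' \<and> openin (topology_generated_by \<S>) V \<and>
      x \<in> U' \<and> y \<in> V \<and> U' \<times> V \<subseteq> (\<lambda>(x, y). x \<otimes> y) -` U \<inter> topspace (prod_topology (topology_generated_by \<S>) (topology_generated_by \<S>))"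
    using h by blast
qed

theorem proposition5p3:
  fixes G (structure)
    and \<L> \<R> :: "'a set set"
  assumes grp: "group G"
    and L_sub: "\<L> \<subseteq> Pow (carrier G)"
    and R_sub: "\<R> \<subseteq> Pow (carrier G)"
    and L_cond: "\<And>x y L. \<lbrakk>x \<in> carrier G; y \<in> carrier G; L \<in> \<L>; x \<otimes> y \<in> L\<rbrakk> \<Longrightarrow>
        \<exists>Lx\<in>\<L>. \<exists>Ly\<in>\<L>. x \<in> Lx \<and> y \<in> Ly \<and> Lx <#> Ly \<subseteq> L"
    and R_cond: "\<And>x y R. \<lbrakk>x \<in> carrier G; y \<in> carrier G; R \<in> \<R>; x \<otimes> y \<in> R\<rbrakk> \<Longrightarrow>
        \<exists>Rx\<in>\<R>. \<exists>Ry\<in>\<R>. x \<in> Rx \<and> y \<in> Ry \<and> Rx <#> Ry \<subseteq> R"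
  shows "continuous_map
           (prod_topology (topology_generated_by (insert (carrier G) (\<L> \<union> \<R>)))
                          (topology_generated_by (insert (carrier G) (\<L> \<union> \<R>))))
           (topology_generated_by (insert (carrier G) (\<L> \<union> \<R>)))
           (\<lambda>(x, y). x \<otimes> y)"
proof -
  let ?S = "insert (carrier G) (\<L> \<union> \<R>)"
  have SU: "\<Union>?S = carrier G" using L_sub R_sub by auto
  show ?thesis
  proof (rule continuous_on_generated_topo)
    fix U assume "U \<in> ?S"
    then consider "U = carrier G" | "U \<in> \<L>" | "U \<in> \<R>" by blast
    then show "openin (prod_topology (topology_generated_by ?S) (topology_generated_by ?S))
           ((\<lambda>(x, y). x \<otimes> y) -` U \<inter> topspace (prod_topology (topology_generated_by ?S) (topology_generated_by ?S)))"
    proof cases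
      case 1
      have "(\<lambda>(x, y). x \<otimes> y) -` U \<inter> topspace (prod_topology (topology_generated_by ?S) (topology_generated_by ?S))
          = topspace (prod_topology (topology_generated_by ?S) (topology_generated_by ?S))"
        using 1 SU grp by (auto simp: group.is_monoid monoid.m_closed)
      then show ?thesis by (metis openin_topspace)
    next
      case 2
      show ?thesis by (rule aux_open[OF L_sub _ SU L_cond 2]) auto
    next
      case 3
      show ?thesis by (rule aux_open[OF R_sub _ SU R_cond 3]) auto
    qed
  next
    show "(\<lambda>(x, y). x \<otimes> y) ` topspace (prod_topology (topology_generated_by ?S) (topology_generated_by ?S)) \<subseteq> \<Union>?S"
      using SU grp by (auto simp: group.is_monoid monoid.m_closed)
  qed
qed

end
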